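(* Let $(G,H)$ be a discrete Hecke pair which has a finite generating set $S$. If $(G,H)$ is of subexponential growth (with respect to a length function $l$ on $(G,H)$), then $(G,H)$ is relatively unimodular, i.e. $L(g)=R(g)$ for all $g\in G$.
   Context: A discrete Hecke pair is a group $G$ with a subgroup $H$ such that $L(x):=[H:H\cap xHx^{-1}]<\infty$ for all $x$; $R(x):=L(x^{-1})$; relatively unimodular means $L(g)/R(g)=1$ for all $g$. $S\subseteq G$ generates $(G,H)$ if $H\backslash G=\bigcup_nH\hat S^n$, $\hat S=S\cup S^{-1}\cup\{e\}$. A length function on $(G,H)$ is $l:G\to[0,\infty)$ with $l(e)=0$, $l(g)=l(g^{-1})$, $l(gh)\le l(g)+l(h)$ and $l|_H=0$; its growth function is $\mathcal G_l(r)=\#\{Hx\in H\backslash G: l(x)\le r\}$, and $(G,H)$ has subexponential growth with respect to $l$ if $\mathcal G_l(r)<\infty$ for all $r$ and $\lim_{r\to\infty}\frac{\ln\mathcal G_l(r)}{r}=0$. *)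

theory Defs
  imports "HOL-Analysis.Analysis" "HOL-Algebra.Algebra"
begin

definition conj_set :: "('a, 'b) monoid_scheme \<Rightarrow> 'a \<Rightarrow> 'a set \<Rightarrow> 'a set" where
  "conj_set G x H = (\<lambda>h. x \<otimes>\<^bsub>G\<^esub> h \<otimes>\<^bsub>G\<^esub> inv\<^bsub>G\<^esub> x) ` H"

definition hecke_cosets :: "('a, 'b) monoid_scheme \<Rightarrow> 'a set \<Rightarrow> 'a \<Rightarrow> 'a set set" where
  "hecke_cosets G H x = rcosets\<^bsub>G\<lparr>carrier := H\<rparr>\<^esub> (H \<inter> conj_set G x H)"

definition hecke_L :: "('a, 'b) monoid_scheme \<Rightarrow> 'a set \<Rightarrow> 'a \<Rightarrow> nat" where
  "hecke_L G H x = card (hecke_cosets G H x)"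

definition hecke_R :: "('a, 'b) monoid_scheme \<Rightarrow> 'a set \<Rightarrow> 'a \<Rightarrow> nat" where
  "hecke_R G H x = hecke_L G H (inv\<^bsub>G\<^esub> x)"

definition hecke_pair :: "('a, 'b) monoid_scheme \<Rightarrow> 'a set \<Rightarrow> bool" where
  "hecke_pair G H \<longleftrightarrow> group G \<and> subgroup H G \<and>
     (\<forall>x\<in>carrier G. finite (hecke_cosets G H x))"

definition relatively_unimodular :: "('a, 'b) monoid_scheme \<Rightarrow> 'a set \<Rightarrow> bool" where
  "relatively_unimodular G H \<longleftrightarrow>
     (\<forall>g\<in>carrier G. real (hecke_L G H g) / real (hecke_R G H g) = 1)"

definition sym_hat :: "('a, 'b) monoid_scheme \<Rightarrow> 'a set \<Rightarrow> 'a set" where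
  "sym_hat G S = S \<union> (\<lambda>s. inv\<^bsub>G\<^esub> s) ` S \<union> {\<one>\<^bsub>G\<^esub>}"

fun set_pow :: "('a, 'b) monoid_scheme \<Rightarrow> 'a set \<Rightarrow> nat \<Rightarrow> 'a set" where
  "set_pow G A 0 = {\<one>\<^bsub>G\<^esub>}"
| "set_pow G A (Suc n) = set_mult G (set_pow G A n) A"

definition generates_pair :: "('a, 'b) monoid_scheme \<Rightarrow> 'a set \<Rightarrow> 'a set \<Rightarrow> bool" where
  "generates_pair G H S \<longleftrightarrow> S \<subseteq> carrier G \<and>
     carrier G = (\<Union>n. set_mult G H (set_pow G (sym_hat G S) n))"

definition length_function :: "('a, 'b) monoid_scheme \<Rightarrow> 'a set \<Rightarrow> ('a \<Rightarrow> real) \<Rightarrow> bool" where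
  "length_function G H l \<longleftrightarrow>
     (\<forall>g\<in>carrier G. l g \<ge> 0) \<and> l \<one>\<^bsub>G\<^esub> = 0 \<and>
     (\<forall>g\<in>carrier G. l (inv\<^bsub>G\<^esub> g) = l g) \<and>
     (\<forall>g\<in>carrier G. \<forall>h\<in>carrier G. l (g \<otimes>\<^bsub>G\<^esub> h) \<le> l g + l h) \<and>
     (\<forall>h\<in>H. l h = 0)"

definition growth_set :: "('a, 'b) monoid_scheme \<Rightarrow> 'a set \<Rightarrow> ('a \<Rightarrow> real) \<Rightarrow> real \<Rightarrow> 'a set set" where
  "growth_set G H l r = {H #>\<^bsub>G\<^esub> x | x. x \<in> carrier G \<and> l x \<le> r}"

definition growth_fun :: "('a, 'b) monoid_scheme \<Rightarrow> 'a set \<Rightarrow> ('a \<Rightarrow> real) \<Rightarrow> real \<Rightarrow> nat" where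
  "growth_fun G H l r = card (growth_set G H l r)"

definition subexp_growth :: "('a, 'b) monoid_scheme \<Rightarrow> 'a set \<Rightarrow> ('a \<Rightarrow> real) \<Rightarrow> bool" where
  "subexp_growth G H l \<longleftrightarrow> (\<forall>r. finite (growth_set G H l r)) \<and>
     ((\<lambda>r. ln (real (growth_fun G H l r)) / r) \<longlongrightarrow> 0) at_top"

end

theory Submission
  imports Defs
begin

lemma img_cong:
  assumes "\<And>x y. x \<in> A \<Longrightarrow> y \<in> A \<Longrightarrow> (F x = F y) = (Gf x = Gf y)"
  shows "card (F ` A) = card (Gf ` A) \<and> (finite (F ` A) = finite (Gf ` A))"
proof -
  let ?P = "(\<lambda>a. (F a, Gf a)) ` A"
  have i1: "inj_on fst ?P" using assms by (auto simp: inj_on_def)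
  have i2: "inj_on snd ?P" using assms by (auto simp: inj_on_def)
  have e1: "fst ` ?P = F ` A" by (auto simp: image_image)
  have e2: "snd ` ?P = Gf ` A" by (auto simp: image_image)
  show ?thesis using card_image[OF i1] card_image[OF i2] finite_image_iff[OF i1] finite_image_iff[OF i2]
    e1 e2 by simp
qed

lemma fiber_sum:
  assumes "\<And>x y. x \<in> A \<Longrightarrow> y \<in> A \<Longrightarrow> F x = F y \<Longrightarrow> Gf x = Gf y"
    and "finite (Gf ` A)"
    and "\<And>Y. Y \<in> Gf ` A \<Longrightarrow> finite (F ` {a\<in>A. Gf a = Y}) \<and> card (F ` {a\<in>A. Gf a = Y}) = c"
  shows "finite (F ` A) \<and> card (F ` A) = card (Gf ` A) * c"
proof -
  have eq: "F ` A = (\<Union>Y\<in>Gf ` A. F ` {a\<in>A. Gf a = Y})" by auto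
  have fin: "finite (F ` A)" unfolding eq using assms(2,3) by blast
  have "card (\<Union>Y\<in>Gf ` A. F ` {a\<in>A. Gf a = Y}) = (\<Sum>Y\<in>Gf ` A. card (F ` {a\<in>A. Gf a = Y}))"
  proof (rule card_UN_disjoint)
    show "finite (Gf ` A)" by fact
    show "\<forall>Y\<in>Gf ` A. finite (F ` {a \<in> A. Gf a = Y})" using assms(3) by blast
    show "\<forall>Y\<in>Gf ` A. \<forall>Z\<in>Gf ` A. Y \<noteq> Z \<longrightarrow> F ` {a \<in> A. Gf a = Y} \<inter> F ` {a \<in> A. Gf a = Z} = {}"
    proof (intro ballI impI equalityI subsetI)
      fix Y Z u assume "Y \<noteq> Z" "u \<in> F ` {a \<in> A. Gf a = Y} \<inter> F ` {a \<in> A. Gf a = Z}"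
      then obtain a b where "a \<in> A" "b \<in> A" "Gf a = Y" "Gf b = Z" "F a = F b" by auto
      then show "u \<in> {}" using assms(1) \<open>Y \<noteq> Z\<close> by metis
    qed auto
  qed
  also have "\<dots> = (\<Sum>Y\<in>Gf ` A. c)" using assms(3) by (intro sum.cong) auto
  finally show ?thesis using fin eq by simp
qed

lemma ar:
  fixes lx ly lxy rx ry rxy na nb nc ta tx txy :: nat
  shows "ta = lx*na \<Longrightarrow> tx = rx*na \<Longrightarrow> tx = ly*nb \<Longrightarrow> txy = ry*nb \<Longrightarrow> ta = lxy*nc \<Longrightarrow> txy = rxy*nc
    \<Longrightarrow> na>0 \<Longrightarrow> nb>0 \<Longrightarrow> nc>0 \<Longrightarrow> lxy*rx*ry = lx*ly*rxy"
proof -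
  assume h: "ta = lx*na" "tx = rx*na" "tx = ly*nb" "txy = ry*nb" "ta = lxy*nc" "txy = rxy*nc" "na>0" "nb>0" "nc>0"
  have "lxy*rx*ry*(na*nb*nc) = (lxy*nc)*(rx*na)*(ry*nb)" by (simp add: ac_simps)
  also have "\<dots> = ta*tx*txy" using h by simp
  also have "\<dots> = (lx*na)*(ly*nb)*(rxy*nc)" using h by simp
  also have "\<dots> = lx*ly*rxy*(na*nb*nc)" by (simp add: ac_simps)
  finally show ?thesis using h by simp
qed

definition cosetsin :: "('a, 'b) monoid_scheme \<Rightarrow> 'a set \<Rightarrow> 'a set \<Rightarrow> 'a set set" where
  "cosetsin G A K = (\<lambda>a. K #>\<^bsub>G\<^esub> a) ` A"

context group begin

lemma cancelL [simp]: "x \<in> carrier G \<Longrightarrow> u \<in> carrier G \<Longrightarrow> inv x \<otimes> (x \<otimes> u) = u"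
  by (simp add: m_assoc [symmetric])
lemma cancelL2 [simp]: "x \<in> carrier G \<Longrightarrow> u \<in> carrier G \<Longrightarrow> x \<otimes> (inv x \<otimes> u) = u"
  by (simp add: m_assoc [symmetric])

lemma rcos_eq_iff:
  assumes "subgroup K G" "a \<in> carrier G" "b \<in> carrier G"
  shows "(K #> a = K #> b) = (a \<otimes> inv b \<in> K)"
proof
  assume "K #> a = K #> b"
  then have "a \<in> K #> b" using rcos_self assms by metis
  then show "a \<otimes> inv b \<in> K" using subgroup.rcos_module[OF assms(1) is_group assms(3,2)] by simp
next
  assume "a \<otimes> inv b \<in> K"
  then have "a \<in> K #> b" using subgroup.rcos_module[OF assms(1) is_group assms(3,2)] by simp
  then show "K #> a = K #> b" using repr_independence assms by metis
qed

lemma conj_sub: "K \<subseteq> carrier G \<Longrightarrow> x \<in> carrier G \<Longrightarrow> conj_set G x K \<subseteq> carrier G"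
  unfolding conj_set_def by auto

lemma conj_mem:
  assumes "K \<subseteq> carrier G" "x \<in> carrier G" "u \<in> carrier G"
  shows "(u \<in> conj_set G x K) = (inv x \<otimes> u \<otimes> x \<in> K)"
proof
  assume "u \<in> conj_set G x K"
  then obtain h where h: "h \<in> K" "u = x \<otimes> h \<otimes> inv x" unfolding conj_set_def by auto
  have hc: "h \<in> carrier G" using h assms by auto
  have "inv x \<otimes> u \<otimes> x = h" using h hc assms by (simp add: m_assoc)
  then show "inv x \<otimes> u \<otimes> x \<in> K" using h by simp
next
  assume a: "inv x \<otimes> u \<otimes> x \<in> K"
  have "u = x \<otimes> (inv x \<otimes> u \<otimes> x) \<otimes> inv x" using assms by (simp add: m_assoc)
  then show "u \<in> conj_set G x K" using a unfolding conj_set_def by blast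
qed

lemma conj_mem2:
  assumes "K \<subseteq> carrier G" "x \<in> carrier G" "u \<in> carrier G"
  shows "(x \<otimes> u \<otimes> inv x \<in> conj_set G x K) = (u \<in> K)"
proof -
  have "inv x \<otimes> (x \<otimes> u \<otimes> inv x) \<otimes> x = u" using assms by (simp add: m_assoc)
  then show ?thesis using conj_mem[OF assms(1,2), of "x \<otimes> u \<otimes> inv x"] assms by simp
qed

lemma conj_subgroup:
  assumes "subgroup K G" "x \<in> carrier G"
  shows "subgroup (conj_set G x K) G"
proof (rule subgroupI)
  have Kc: "K \<subseteq> carrier G" using assms subgroup.subset by blast
  show "conj_set G x K \<subseteq> carrier G" using conj_sub[OF Kc assms(2)] .
  show "conj_set G x K \<noteq> {}" using assms subgroup.one_closed unfolding conj_set_def by blast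
  fix a b assume a: "a \<in> conj_set G x K" and b: "b \<in> conj_set G x K"
  have ac: "a \<in> carrier G" and bc: "b \<in> carrier G" using a b conj_sub[OF Kc assms(2)] by auto
  have a': "inv x \<otimes> a \<otimes> x \<in> K" using conj_mem[OF Kc assms(2) ac] a by simp
  have b': "inv x \<otimes> b \<otimes> x \<in> K" using conj_mem[OF Kc assms(2) bc] b by simp
  have "inv x \<otimes> inv a \<otimes> x = inv (inv x \<otimes> a \<otimes> x)" using ac assms(2)
    by (simp add: inv_mult_group m_assoc)
  then have "inv x \<otimes> inv a \<otimes> x \<in> K" using a' assms(1) subgroup.m_inv_closed by metis
  then show "inv a \<in> conj_set G x K" using conj_mem[OF Kc assms(2) inv_closed[OF ac]] by (rule iffD2[rotated])
  have "inv x \<otimes> (a \<otimes> b) \<otimes> x = (inv x \<otimes> a \<otimes> x) \<otimes> (inv x \<otimes> b \<otimes> x)" using ac bc assms(2)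
    by (simp add: m_assoc)
  then have "inv x \<otimes> (a \<otimes> b) \<otimes> x \<in> K" using a' b' assms(1) subgroup.m_closed by metis
  then show "a \<otimes> b \<in> conj_set G x K" using conj_mem[OF Kc assms(2) m_closed[OF ac bc]] by (rule iffD2[rotated])
qed

lemma conj_conj:
  assumes "K \<subseteq> carrier G" "x \<in> carrier G" "y \<in> carrier G"
  shows "conj_set G x (conj_set G y K) = conj_set G (x \<otimes> y) K"
  unfolding conj_set_def image_image
  apply (rule image_cong[OF refl])
  using assms by (auto simp: inv_mult_group m_assoc)

lemma conj_one: "K \<subseteq> carrier G \<Longrightarrow> conj_set G \<one> K = K"
  unfolding conj_set_def by force

lemma conj_Int:
  assumes "A \<subseteq> carrier G" "B \<subseteq> carrier G" "x \<in> carrier G"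
  shows "conj_set G x (A \<inter> B) = conj_set G x A \<inter> conj_set G x B"
proof -
  have AB: "A \<inter> B \<subseteq> carrier G" using assms by auto
  show ?thesis
    using conj_sub[OF AB assms(3)] conj_sub[OF assms(1,3)] conj_mem[OF AB assms(3)]
      conj_mem[OF assms(1,3)] conj_mem[OF assms(2,3)] by blast
qed

lemma conj_prod:
  assumes "x \<in> carrier G" "a \<in> carrier G" "b \<in> carrier G"
  shows "(x \<otimes> a \<otimes> inv x) \<otimes> inv (x \<otimes> b \<otimes> inv x) = x \<otimes> (a \<otimes> inv b) \<otimes> inv x"
  using assms by (simp add: inv_mult_group m_assoc)

lemma cosetsin_conj_eq:
  "cosetsin G (conj_set G x A) Q = (\<lambda>a. Q #> (x \<otimes> a \<otimes> inv x)) ` A"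
  by (simp add: cosetsin_def conj_set_def image_image)

lemma cosetsin_conj:
  assumes "subgroup A G" "subgroup K G" "x \<in> carrier G"
  shows "card (cosetsin G (conj_set G x A) (conj_set G x K)) = card (cosetsin G A K)
     \<and> finite (cosetsin G (conj_set G x A) (conj_set G x K)) = finite (cosetsin G A K)"
proof -
  have Ac: "A \<subseteq> carrier G" and Kc: "K \<subseteq> carrier G" using assms subgroup.subset by blast+
  have cs: "subgroup (conj_set G x K) G" using conj_subgroup assms by blast
  have "card ((\<lambda>a. conj_set G x K #> (x \<otimes> a \<otimes> inv x)) ` A) = card ((\<lambda>a. K #> a) ` A)
    \<and> finite ((\<lambda>a. conj_set G x K #> (x \<otimes> a \<otimes> inv x)) ` A) = finite ((\<lambda>a. K #> a) ` A)"
  proof (rule img_cong)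
    fix a b assume a: "a \<in> A" and b: "b \<in> A"
    have ac: "a \<in> carrier G" and bc: "b \<in> carrier G" using a b Ac by auto
    have "(conj_set G x K #> (x \<otimes> a \<otimes> inv x) = conj_set G x K #> (x \<otimes> b \<otimes> inv x))
       = ((x \<otimes> a \<otimes> inv x) \<otimes> inv (x \<otimes> b \<otimes> inv x) \<in> conj_set G x K)"
      using rcos_eq_iff[OF cs] ac bc assms(3) by simp
    also have "\<dots> = (x \<otimes> (a \<otimes> inv b) \<otimes> inv x \<in> conj_set G x K)"
      using conj_prod[OF assms(3) ac bc] by simp
    also have "\<dots> = (a \<otimes> inv b \<in> K)" using conj_mem2[OF Kc assms(3)] ac bc by simp
    also have "\<dots> = (K #> a = K #> b)" using rcos_eq_iff[OF assms(2) ac bc] by simp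
    finally show "(conj_set G x K #> (x \<otimes> a \<otimes> inv x) = conj_set G x K #> (x \<otimes> b \<otimes> inv x))
       = (K #> a = K #> b)" .
  qed
  then show ?thesis unfolding cosetsin_conj_eq by (simp add: cosetsin_def)
qed

lemma restrict_fin:
  assumes "subgroup A G" "subgroup B G" "subgroup C G" "B \<subseteq> A" "finite (cosetsin G A C)"
  shows "finite (cosetsin G B (B \<inter> C))"
proof -
  have Bc: "B \<subseteq> carrier G" using assms subgroup.subset by blast
  have BC: "subgroup (B \<inter> C) G" using assms subgroups_Inter_pair by blast
  have "finite ((\<lambda>a. (B \<inter> C) #> a) ` B) = finite ((\<lambda>a. C #> a) ` B)"
  proof (rule img_cong[THEN conjunct2])
    fix a b assume a: "a \<in> B" and b: "b \<in> B"
    have ac: "a \<in> carrier G" and bc: "b \<in> carrier G" using a b Bc by auto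
    have "a \<otimes> inv b \<in> B" using a b assms(2) subgroup.m_closed subgroup.m_inv_closed by metis
    then show "((B \<inter> C) #> a = (B \<inter> C) #> b) = (C #> a = C #> b)"
      using rcos_eq_iff[OF BC ac bc] rcos_eq_iff[OF assms(3) ac bc] by blast
  qed
  moreover have "(\<lambda>a. C #> a) ` B \<subseteq> cosetsin G A C" unfolding cosetsin_def using assms(4) by blast
  ultimately show ?thesis using assms(5) finite_subset unfolding cosetsin_def by metis
qed

lemma tower:
  assumes "subgroup A G" "subgroup B G" "subgroup K G" "K \<subseteq> B" "B \<subseteq> A"
    and "finite (cosetsin G A B)" "finite (cosetsin G B K)"
  shows "finite (cosetsin G A K) \<and> card (cosetsin G A K) = card (cosetsin G A B) * card (cosetsin G B K)"
  unfolding cosetsin_def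
proof (rule fiber_sum)
  have Ac: "A \<subseteq> carrier G" using assms subgroup.subset by blast
  show "finite ((#>) B ` A)" using assms(6) unfolding cosetsin_def .
  fix x y assume "x \<in> A" "y \<in> A" "K #> x = K #> y"
  then show "B #> x = B #> y" using rcos_eq_iff[OF assms(3)] rcos_eq_iff[OF assms(2)] Ac assms(4) by blast
next
  have Ac: "A \<subseteq> carrier G" using assms subgroup.subset by blast
  have Bc: "B \<subseteq> carrier G" using assms subgroup.subset by blast
  fix Y assume "Y \<in> (#>) B ` A"
  then obtain a0 where a0: "a0 \<in> A" "Y = B #> a0" by auto
  have a0c: "a0 \<in> carrier G" using a0 Ac by auto
  have fib: "{a \<in> A. B #> a = Y} = (\<lambda>b. b \<otimes> a0) ` B"
  proof (intro equalityI subsetI)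
    fix a assume "a \<in> {a \<in> A. B #> a = Y}"
    then have a: "a \<in> A" "B #> a = B #> a0" using a0 by auto
    have ac: "a \<in> carrier G" using a Ac by auto
    have "a \<otimes> inv a0 \<in> B" using rcos_eq_iff[OF assms(2) ac a0c] a by simp
    moreover have "a = (a \<otimes> inv a0) \<otimes> a0" using ac a0c by (simp add: m_assoc)
    ultimately show "a \<in> (\<lambda>b. b \<otimes> a0) ` B" by blast
  next
    fix a assume "a \<in> (\<lambda>b. b \<otimes> a0) ` B"
    then obtain b where b: "b \<in> B" "a = b \<otimes> a0" by auto
    have bc: "b \<in> carrier G" using b Bc by auto
    have "b \<in> A" using b assms(5) by auto
    then have "a \<in> A" using subgroup.m_closed[OF assms(1) _ a0(1)] b by simp
    moreover have "a \<otimes> inv a0 = b" using b bc a0c by (simp add: m_assoc)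
    then have "B #> a = B #> a0" using rcos_eq_iff[OF assms(2), of a a0] b bc a0c by simp
    ultimately show "a \<in> {a \<in> A. B #> a = Y}" using a0 by simp
  qed
  have "card ((\<lambda>b. K #> (b \<otimes> a0)) ` B) = card ((\<lambda>b. K #> b) ` B)
     \<and> finite ((\<lambda>b. K #> (b \<otimes> a0)) ` B) = finite ((\<lambda>b. K #> b) ` B)"
  proof (rule img_cong)
    fix a b assume a: "a \<in> B" and b: "b \<in> B"
    have ac: "a \<in> carrier G" and bc: "b \<in> carrier G" using a b Bc by auto
    have "(a \<otimes> a0) \<otimes> inv (b \<otimes> a0) = a \<otimes> inv b" using ac bc a0c by (simp add: inv_mult_group m_assoc)
    then show "(K #> (a \<otimes> a0) = K #> (b \<otimes> a0)) = (K #> a = K #> b)"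
      using rcos_eq_iff[OF assms(3), of "a \<otimes> a0" "b \<otimes> a0"] rcos_eq_iff[OF assms(3), of a b] ac bc a0c by simp
  qed
  then show "finite ((#>) K ` {a \<in> A. B #> a = Y}) \<and> card ((#>) K ` {a \<in> A. B #> a = Y}) = card ((#>) K ` B)"
    unfolding fib image_image using assms(7) unfolding cosetsin_def by simp
qed

lemma cosetsin_pos:
  assumes "subgroup A G" "finite (cosetsin G A K)"
  shows "card (cosetsin G A K) > 0"
proof -
  have "\<one> \<in> A" using assms subgroup.one_closed by blast
  then have "cosetsin G A K \<noteq> {}" unfolding cosetsin_def by blast
  then show ?thesis using assms(2) by (simp add: card_gt_0_iff)
qed

lemma hecke_cosets_eq: "hecke_cosets G H x = cosetsin G H (H \<inter> conj_set G x H)"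
  unfolding hecke_cosets_def cosetsin_def RCOSETS_def r_coset_def by auto

definition MM :: "'a set \<Rightarrow> 'a \<Rightarrow> 'a \<Rightarrow> nat" where
  "MM H a b = card (cosetsin G (conj_set G a H) (conj_set G a H \<inter> conj_set G b H))"

end

locale hecke = group + fixes H assumes sub: "subgroup H G" and fin: "\<And>x. x \<in> carrier G \<Longrightarrow> finite (hecke_cosets G H x)"
begin

lemma M_eq:
  assumes "a \<in> carrier G" "b \<in> carrier G"
  shows "MM H a b = hecke_L G H (inv a \<otimes> b) \<and>
     finite (cosetsin G (conj_set G a H) (conj_set G a H \<inter> conj_set G b H))"
proof -
  have Hc: "H \<subseteq> carrier G" using sub subgroup.subset by blast
  have c: "inv a \<otimes> b \<in> carrier G" using assms by simp
  have S: "subgroup (H \<inter> conj_set G (inv a \<otimes> b) H) G"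
    using subgroups_Inter_pair conj_subgroup[OF sub c] sub by blast
  have "conj_set G a H \<inter> conj_set G b H = conj_set G a (H \<inter> conj_set G (inv a \<otimes> b) H)"
    using conj_Int[OF Hc conj_sub[OF Hc c] assms(1)] conj_conj[OF Hc assms(1) c] assms(1,2) by simp
  then show ?thesis using cosetsin_conj[OF sub S assms(1)] fin[OF c]
    unfolding MM_def hecke_L_def hecke_cosets_eq by simp
qed

lemma tri:
  assumes "a \<in> carrier G" "b \<in> carrier G" "d \<in> carrier G"
    and K: "K = conj_set G a H \<inter> conj_set G b H \<inter> conj_set G d H"
  shows "card (cosetsin G (conj_set G a H) K) = MM H a b * card (cosetsin G (conj_set G a H \<inter> conj_set G b H) K)
    \<and> card (cosetsin G (conj_set G a H \<inter> conj_set G b H) K) > 0"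
proof -
  let ?A = "conj_set G a H" and ?B = "conj_set G b H" and ?D = "conj_set G d H"
  have sA: "subgroup ?A G" and sB: "subgroup ?B G" and sD: "subgroup ?D G"
    using conj_subgroup sub assms by blast+
  have sAB: "subgroup (?A \<inter> ?B) G" and sAD: "subgroup (?A \<inter> ?D) G" using sA sB sD subgroups_Inter_pair by blast+
  have sK: "subgroup K G" using K sAB sD subgroups_Inter_pair by metis
  have f1: "finite (cosetsin G ?A (?A \<inter> ?B))" using M_eq[OF assms(1,2)] by simp
  have f3: "finite (cosetsin G ?A (?A \<inter> ?D))" using M_eq[OF assms(1,3)] by simp
  have "finite (cosetsin G (?A \<inter> ?B) ((?A \<inter> ?B) \<inter> (?A \<inter> ?D)))"
    by (rule restrict_fin[OF sA sAB sAD _ f3]) blast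
  moreover have "(?A \<inter> ?B) \<inter> (?A \<inter> ?D) = K" using K by blast
  ultimately have f2: "finite (cosetsin G (?A \<inter> ?B) K)" by simp
  have "card (cosetsin G ?A K) = card (cosetsin G ?A (?A \<inter> ?B)) * card (cosetsin G (?A \<inter> ?B) K)"
    using tower[OF sA sAB sK _ _ f1 f2] K by blast
  then show ?thesis using cosetsin_pos[OF sAB f2] unfolding MM_def by simp
qed

lemma inv_mult_cancel2: "x \<in> carrier G \<Longrightarrow> y \<in> carrier G \<Longrightarrow> inv (x \<otimes> y) \<otimes> x = inv y"
  by (simp add: inv_mult_group m_assoc)

lemma mult_nat:
  assumes x: "x \<in> carrier G" and y: "y \<in> carrier G"
  shows "hecke_L G H (x \<otimes> y) * hecke_R G H x * hecke_R G H y = hecke_L G H x * hecke_L G H y * hecke_R G H (x \<otimes> y)"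
proof -
  have xy: "x \<otimes> y \<in> carrier G" using x y by simp
  have o: "\<one> \<in> carrier G" by simp
  let ?P1 = "conj_set G \<one> H" and ?Px = "conj_set G x H" and ?Pxy = "conj_set G (x \<otimes> y) H"
  define K where "K = ?P1 \<inter> ?Px \<inter> ?Pxy"
  note T = tri
  have t1: "card (cosetsin G ?P1 K) = MM H \<one> x * card (cosetsin G (?P1 \<inter> ?Px) K) \<and> card (cosetsin G (?P1 \<inter> ?Px) K) > 0"
    by (rule T[OF o x xy]) (simp add: K_def)
  have t2: "card (cosetsin G ?Px K) = MM H x \<one> * card (cosetsin G (?Px \<inter> ?P1) K)"
    using T[OF x o xy, of K] unfolding K_def by blast
  have t3: "card (cosetsin G ?Px K) = MM H x (x \<otimes> y) * card (cosetsin G (?Px \<inter> ?Pxy) K) \<and> card (cosetsin G (?Px \<inter> ?Pxy) K) > 0"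
    using T[OF x xy o, of K] unfolding K_def by blast
  have t4: "card (cosetsin G ?Pxy K) = MM H (x \<otimes> y) x * card (cosetsin G (?Pxy \<inter> ?Px) K)"
    using T[OF xy x o, of K] unfolding K_def by blast
  have t5: "card (cosetsin G ?P1 K) = MM H \<one> (x \<otimes> y) * card (cosetsin G (?P1 \<inter> ?Pxy) K) \<and> card (cosetsin G (?P1 \<inter> ?Pxy) K) > 0"
    using T[OF o xy x, of K] unfolding K_def by blast
  have t6: "card (cosetsin G ?Pxy K) = MM H (x \<otimes> y) \<one> * card (cosetsin G (?Pxy \<inter> ?P1) K)"
    using T[OF xy o x, of K] unfolding K_def by blast
  have c1: "?Px \<inter> ?P1 = ?P1 \<inter> ?Px" "?Pxy \<inter> ?Px = ?Px \<inter> ?Pxy" "?Pxy \<inter> ?P1 = ?P1 \<inter> ?Pxy" by blast+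
  have m1: "MM H \<one> x = hecke_L G H x" using M_eq[OF o x] x by simp
  have m2: "MM H x \<one> = hecke_R G H x" using M_eq[OF x o] x by (simp add: hecke_R_def)
  have m3: "MM H x (x \<otimes> y) = hecke_L G H y" using M_eq[OF x xy] x y by simp
  have m4: "MM H (x \<otimes> y) x = hecke_R G H y" using M_eq[OF xy x] x y
    by (simp add: hecke_R_def inv_mult_cancel2)
  have m5: "MM H \<one> (x \<otimes> y) = hecke_L G H (x \<otimes> y)" using M_eq[OF o xy] xy by simp
  have m6: "MM H (x \<otimes> y) \<one> = hecke_R G H (x \<otimes> y)" using M_eq[OF xy o] xy by (simp add: hecke_R_def)
  show ?thesis
    apply (rule ar[where lx="hecke_L G H x" and ly="hecke_L G H y" and lxy="hecke_L G H (x \<otimes> y)"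
      and rx="hecke_R G H x" and ry="hecke_R G H y" and rxy="hecke_R G H (x \<otimes> y)"
      and na="card (cosetsin G (?P1 \<inter> ?Px) K)" and nb="card (cosetsin G (?Px \<inter> ?Pxy) K)"
      and nc="card (cosetsin G (?P1 \<inter> ?Pxy) K)"
      and ta="card (cosetsin G ?P1 K)" and tx="card (cosetsin G ?Px K)" and txy="card (cosetsin G ?Pxy K)"])
    using t1 t2 t3 t4 t5 t6 c1 m1 m2 m3 m4 m5 m6 by simp_all
qed

lemma L_pos: "x \<in> carrier G \<Longrightarrow> hecke_L G H x > 0"
  unfolding hecke_L_def using cosetsin_pos[OF sub] fin unfolding hecke_cosets_eq
  by (metis hecke_cosets_eq)

lemma R_pos: "x \<in> carrier G \<Longrightarrow> hecke_R G H x > 0"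
  unfolding hecke_R_def using L_pos by simp

definition DD :: "'a \<Rightarrow> real" where "DD x = real (hecke_L G H x) / real (hecke_R G H x)"

lemma DD_pos: "x \<in> carrier G \<Longrightarrow> DD x > 0"
  unfolding DD_def using L_pos R_pos by simp

lemma DD_mult:
  assumes x: "x \<in> carrier G" and y: "y \<in> carrier G"
  shows "DD (x \<otimes> y) = DD x * DD y"
proof -
  have e: "real (hecke_L G H (x \<otimes> y)) * real (hecke_R G H x) * real (hecke_R G H y) =
    real (hecke_L G H x) * real (hecke_L G H y) * real (hecke_R G H (x \<otimes> y))"
    using mult_nat[OF x y] by (metis of_nat_mult)
  have p: "real (hecke_R G H x) > 0" "real (hecke_R G H y) > 0" "real (hecke_R G H (x \<otimes> y)) > 0"
    using R_pos x y by auto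
  show ?thesis unfolding DD_def using e p by (simp add: field_simps)
qed

lemma DD_one: "DD \<one> = 1"
  unfolding DD_def hecke_R_def using L_pos[of \<one>] by simp

lemma DD_pow: "x \<in> carrier G \<Longrightarrow> DD (x [^] (n::nat)) = DD x ^ n"
proof (induction n)
  case 0 then show ?case using DD_one by simp
next
  case (Suc n) then show ?case using DD_mult[of "x [^] n" x] by (simp add: nat_pow_Suc)
qed

lemma DD_inv: "x \<in> carrier G \<Longrightarrow> DD (inv x) = 1 / DD x"
  unfolding DD_def hecke_R_def by simp

lemma coset_count:
  assumes g: "g \<in> carrier G"
  shows "card ((\<lambda>h. H #> (g \<otimes> h)) ` H) = hecke_R G H g"
proof -
  have Hc: "H \<subseteq> carrier G" using sub subgroup.subset by blast
  have ig: "inv g \<in> carrier G" using g by simp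
  let ?K = "H \<inter> conj_set G (inv g) H"
  have sK: "subgroup ?K G" using subgroups_Inter_pair conj_subgroup[OF sub ig] sub by blast
  have "card ((\<lambda>h. H #> (g \<otimes> h)) ` H) = card ((\<lambda>h. ?K #> h) ` H)
    \<and> finite ((\<lambda>h. H #> (g \<otimes> h)) ` H) = finite ((\<lambda>h. ?K #> h) ` H)"
  proof (rule img_cong)
    fix a b assume a: "a \<in> H" and b: "b \<in> H"
    have ac: "a \<in> carrier G" and bc: "b \<in> carrier G" using a b Hc by auto
    have abH: "a \<otimes> inv b \<in> H" using a b sub subgroup.m_closed subgroup.m_inv_closed by metis
    have abc: "a \<otimes> inv b \<in> carrier G" using ac bc by simp
    have e1: "(g \<otimes> a) \<otimes> inv (g \<otimes> b) = g \<otimes> (a \<otimes> inv b) \<otimes> inv g"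
      using g ac bc by (simp add: inv_mult_group m_assoc)
    have "(H #> (g \<otimes> a) = H #> (g \<otimes> b)) = ((g \<otimes> a) \<otimes> inv (g \<otimes> b) \<in> H)"
      using rcos_eq_iff[OF sub, of "g \<otimes> a" "g \<otimes> b"] g ac bc by simp
    also have "\<dots> = (a \<otimes> inv b \<in> conj_set G (inv g) H)"
      using e1 conj_mem[OF Hc ig abc] g by simp
    also have "\<dots> = (a \<otimes> inv b \<in> ?K)" using abH by simp
    also have "\<dots> = (?K #> a = ?K #> b)" using rcos_eq_iff[OF sK ac bc] by simp
    finally show "(H #> (g \<otimes> a) = H #> (g \<otimes> b)) = (?K #> a = ?K #> b)" .
  qed
  then show ?thesis unfolding hecke_R_def hecke_L_def hecke_cosets_eq cosetsin_def by simp
qed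

lemma main_contra:
  assumes lf: "length_function G H l" and sg: "subexp_growth G H l"
    and g: "g \<in> carrier G" and D1: "DD g < 1"
  shows False
proof -
  have Hc: "H \<subseteq> carrier G" using sub subgroup.subset by blast
  define \<rho> where "\<rho> = 1 / DD g"
  have Dp: "DD g > 0" using DD_pos g by simp
  have \<rho>1: "\<rho> > 1" unfolding \<rho>_def using Dp D1 by simp
  define c where "c = l g"
  have l0: "\<forall>g\<in>carrier G. l g \<ge> 0" and lsub: "\<forall>g\<in>carrier G. \<forall>h\<in>carrier G. l (g \<otimes> h) \<le> l g + l h"
    and lH: "\<forall>h\<in>H. l h = 0" and lone: "l \<one> = 0"
    using lf unfolding length_function_def by auto
  have c0: "c \<ge> 0" using l0 g unfolding c_def by auto
  have lpow: "l (g [^] n) \<le> real n * c" for n :: nat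
  proof (induction n)
    case 0 then show ?case using lone by simp
  next
    case (Suc n)
    have "l (g [^] Suc n) = l (g [^] n \<otimes> g)" by (simp add: nat_pow_Suc)
    also have "\<dots> \<le> l (g [^] n) + l g" using lsub g by simp
    also have "\<dots> \<le> real n * c + c" using Suc unfolding c_def by simp
    finally show ?case by (simp add: algebra_simps)
  qed
  have finset: "\<And>r. finite (growth_set G H l r)" using sg unfolding subexp_growth_def by auto
  have big: "real (growth_fun G H l (real n * c)) \<ge> \<rho> ^ n" for n :: nat
  proof -
    have gn: "g [^] n \<in> carrier G" using g by simp
    have sub1: "(\<lambda>h. H #> (g [^] n \<otimes> h)) ` H \<subseteq> growth_set G H l (real n * c)"
    proof
      fix Z assume "Z \<in> (\<lambda>h. H #> (g [^] n \<otimes> h)) ` H"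
      then obtain h where h: "h \<in> H" "Z = H #> (g [^] n \<otimes> h)" by auto
      have hc: "h \<in> carrier G" using h Hc by auto
      have "l (g [^] n \<otimes> h) \<le> l (g [^] n) + l h" using lsub gn hc by simp
      also have "\<dots> \<le> real n * c" using lpow[of n] lH h by simp
      finally show "Z \<in> growth_set G H l (real n * c)" unfolding growth_set_def
        using h gn hc by blast
    qed
    have "hecke_R G H (g [^] n) \<le> growth_fun G H l (real n * c)"
      using card_mono[OF finset sub1] coset_count[OF gn] unfolding growth_fun_def by simp
    moreover have "real (hecke_R G H (g [^] n)) \<ge> \<rho> ^ n"
    proof -
      have Lp: "real (hecke_L G H (g [^] n)) \<ge> 1" using L_pos[OF gn] by simp
      have Rp: "real (hecke_R G H (g [^] n)) > 0" using R_pos[OF gn] by simp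
      have "DD (g [^] n) = DD g ^ n" using DD_pow g by simp
      then have e: "real (hecke_R G H (g [^] n)) = real (hecke_L G H (g [^] n)) * \<rho> ^ n"
      proof -
        have a1: "real (hecke_L G H g) > 0" "real (hecke_R G H g) > 0" using L_pos[OF g] R_pos[OF g] by auto
        have "real (hecke_L G H (g [^] n)) / real (hecke_R G H (g [^] n)) = (real (hecke_L G H g) / real (hecke_R G H g)) ^ n"
          using \<open>DD (g [^] n) = DD g ^ n\<close> unfolding DD_def .
        then show ?thesis unfolding \<rho>_def DD_def using Rp a1 by (simp add: field_simps power_divide)
      qed
      have "\<rho> ^ n \<ge> 0" using \<rho>1 by simp
      then show ?thesis using e Lp by (metis mult_le_cancel_right1 linorder_not_le order_less_le_trans zero_less_power \<rho>1 less_trans zero_less_one mult_right_mono nle_le)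
    qed
    ultimately show ?thesis by linarith
  qed
  show False
  proof (cases "c = 0")
    case True
    obtain n where "real (growth_fun G H l 0) < \<rho> ^ n" using real_arch_pow[OF \<rho>1] by blast
    then show False using big[of n] True by simp
  next
    case False
    then have cp: "c > 0" using c0 by simp
    have lim: "((\<lambda>r. ln (real (growth_fun G H l r)) / r) \<longlongrightarrow> 0) at_top"
      using sg unfolding subexp_growth_def by auto
    have lrp: "ln \<rho> / c > 0" using \<rho>1 cp by simp
    have "eventually (\<lambda>r. ln (real (growth_fun G H l r)) / r < ln \<rho> / c) at_top"
      using order_tendstoD(2)[OF lim lrp] .
    then obtain N where N: "\<And>r. r \<ge> N \<Longrightarrow> ln (real (growth_fun G H l r)) / r < ln \<rho> / c"
      by (auto simp: eventually_at_top_linorder)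
    define n where "n = nat \<lceil>N / c\<rceil> + 1"
    have n1: "real n \<ge> 1" unfolding n_def by simp
    have "real n \<ge> N / c" unfolding n_def by linarith
    then have nN: "real n * c \<ge> N" using cp by (simp add: field_simps)
    have ncp: "real n * c > 0" using n1 cp by simp
    have rp: "\<rho> ^ n > 0" using \<rho>1 by simp
    have "ln (\<rho> ^ n) \<le> ln (real (growth_fun G H l (real n * c)))"
      using big[of n] rp by simp
    then have "real n * ln \<rho> \<le> ln (real (growth_fun G H l (real n * c)))"
      using \<rho>1 by (simp add: ln_realpow)
    then have "real n * ln \<rho> / (real n * c) \<le> ln (real (growth_fun G H l (real n * c))) / (real n * c)"
      by (intro divide_right_mono) (use ncp in auto)
    moreover have "real n * ln \<rho> / (real n * c) = ln \<rho> / c" using n1 by simp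
    ultimately show False using N[OF nN] by simp
  qed
qed

end

theorem proposition4p6:
  fixes G :: "('a, 'b) monoid_scheme" and H S :: "'a set" and l :: "'a \<Rightarrow> real"
  assumes "hecke_pair G H"
    and "finite S" and "generates_pair G H S"
    and "length_function G H l"
    and "subexp_growth G H l"
  shows "relatively_unimodular G H"
proof -
  interpret hecke G H using assms(1) unfolding hecke_pair_def
    by (simp add: hecke.intro hecke_axioms.intro)
  show ?thesis unfolding relatively_unimodular_def
  proof
    fix g assume g: "g \<in> carrier G"
    have D: "DD g = real (hecke_L G H g) / real (hecke_R G H g)" by (simp add: DD_def)
    have Dp: "DD g > 0" using DD_pos g by simp
    show "real (hecke_L G H g) / real (hecke_R G H g) = 1"
    proof (rule ccontr)
      assume ne: "real (hecke_L G H g) / real (hecke_R G H g) \<noteq> 1"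
      show False
      proof (cases "DD g < 1")
        case True then show False using main_contra[OF assms(4,5) g] by simp
      next
        case False
        have ne': "DD g \<noteq> 1" using ne D by simp
        then have "DD g > 1" using False by linarith
        then have "DD (inv\<^bsub>G\<^esub> g) < 1" using DD_inv[OF g] by simp
        then show False using main_contra[OF assms(4,5) inv_closed[OF g]] by simp
      qed
    qed
  qed
qed

end
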